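(* For the modified EnvZ/OmpR network described in the context, with rate constants $k_1,\dots,k_{16}$ treated as symbols: (i) there are no nonzero type 1 complex-linear invariants on $\{C_7,C_8,C_{11},C_{14}\}$; (ii) for each $i\in\{1,2,3\}$ the space of type 1 complex-linear invariants on $\{C_i,C_7,C_8,C_{11},C_{14}\}$ has dimension $1$, spanned respectively by \[k_{16}x^{C_{14}}-\frac{k_1k_3k_5}{k_2(k_4+k_5)}x^{C_1}+\frac{k_{10}k_{12}}{k_{11}+k_{12}}x^{C_8}+\frac{k_{13}k_{15}}{k_{14}+k_{15}}x^{C_{11}},\] \[k_{16}x^{C_{14}}-\frac{k_3k_5}{k_4+k_5}x^{C_2}+\frac{k_{10}k_{12}}{k_{11}+k_{12}}x^{C_8}+\frac{k_{13}k_{15}}{k_{14}+k_{15}}x^{C_{11}},\] \[k_{16}x^{C_{14}}-k_5x^{C_3}+\frac{k_{10}k_{12}}{k_{11}+k_{12}}x^{C_8}+\frac{k_{13}k_{15}}{k_{14}+k_{15}}x^{C_{11}};\] in particular each of these expressions vanishes at every steady state for all positive values of the rate constants.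
   Context: The modified EnvZ/OmpR network has mass-action kinetics and reactions $\mathrm{EnvZ\text{-}ADP}\underset{k_2}{\overset{k_1}{\rightleftharpoons}}\mathrm{EnvZ}\underset{k_4}{\overset{k_3}{\rightleftharpoons}}\mathrm{EnvZ\text{-}ATP}\xrightarrow{k_5}\mathrm{EnvZ\text{-}P}$; $\mathrm{EnvZ\text{-}P}+\mathrm{OmpR}\underset{k_7}{\overset{k_6}{\rightleftharpoons}}\mathrm{EnvZ\text{-}P\text{-}OmpR}\underset{k_9}{\overset{k_8}{\rightleftharpoons}}\mathrm{EnvZ}+\mathrm{OmpR\text{-}P}$; $\mathrm{EnvZ\text{-}ATP}+\mathrm{OmpR\text{-}P}\underset{k_{11}}{\overset{k_{10}}{\rightleftharpoons}}\mathrm{EnvZ\text{-}ATP\text{-}OmpR\text{-}P}\xrightarrow{k_{12}}\mathrm{EnvZ\text{-}ATP}+\mathrm{OmpR}$; $\mathrm{EnvZ\text{-}ADP}+\mathrm{OmpR\text{-}P}\underset{k_{14}}{\overset{k_{13}}{\rightleftharpoons}}\mathrm{EnvZ\text{-}ADP\text{-}OmpR\text{-}P}\xrightarrow{k_{15}}\mathrm{EnvZ\text{-}ADP}+\mathrm{OmpR}$; $\mathrm{OmpR\text{-}P}\xrightarrow{k_{16}}\mathrm{OmpR}$ (here $A\underset{k'}{\overset{k}{\rightleftharpoons}}B$ means $A\xrightarrow{k}B$ and $B\xrightarrow{k'}A$; hyphenated names are single species). Complexes are numbered $C_1=\mathrm{EnvZ\text{-}ADP}$, $C_2=\mathrm{EnvZ}$,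 $C_3=\mathrm{EnvZ\text{-}ATP}$, $C_4=\mathrm{EnvZ\text{-}P}$, $C_5=\mathrm{EnvZ\text{-}P}+\mathrm{OmpR}$, $C_6=\mathrm{EnvZ\text{-}P\text{-}OmpR}$, $C_7=\mathrm{EnvZ}+\mathrm{OmpR\text{-}P}$, $C_8=\mathrm{EnvZ\text{-}ATP}+\mathrm{OmpR\text{-}P}$, $C_9=\mathrm{EnvZ\text{-}ATP\text{-}OmpR\text{-}P}$, $C_{10}=\mathrm{EnvZ\text{-}ATP}+\mathrm{OmpR}$, $C_{11}=\mathrm{EnvZ\text{-}ADP}+\mathrm{OmpR\text{-}P}$, $C_{12}=\mathrm{EnvZ\text{-}ADP\text{-}OmpR\text{-}P}$, $C_{13}=\mathrm{EnvZ\text{-}ADP}+\mathrm{OmpR}$, $C_{14}=\mathrm{OmpR\text{-}P}$, $C_{15}=\mathrm{OmpR}$. For concentrations $x$, $x^{C}=\prod_jx_j^{C(S_j)}$, $\Psi(x)=(x^{C_1},\dots,x^{C_{15}})^\top$, and the dynamics are $dx/dt=M\Psi(x)$ with $M=Y\mathcal{L}(G)$ ($Y$ has the complexes as columns; $\mathcal{L}(G)_{ji}=\kappa_{ij}$ for an edge $C_i\to C_j$ with rate constant $\kappa_{ij}$, $\mathcal{L}(G)_{ii}=-\sum_j\kappa_{ij}$, other entries $0$). A type 1 complex-linear invariant on selected complexes $C_{i_1},\dots,C_{i_k}$ is a polynomial $\sum_ra_rx^{C_{i_r}}$ such that the vector with entry $a_r$ at position $i_r$ and $0$ elsewhere lies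 in the row span of $M$. *)

theory Defs
  imports Complex_Main
begin

text \<open>Species (1-based):
  1 EnvZ-ADP, 2 EnvZ, 3 EnvZ-ATP, 4 EnvZ-P, 5 OmpR, 6 EnvZ-P-OmpR, 7 OmpR-P,
  8 EnvZ-ATP-OmpR-P, 9 EnvZ-ADP-OmpR-P.
  Complexes C1..C15 as in the paper, given as lists of species.
  Vectors/matrices are functions on nat, meaningful on the index ranges
  {1..9} (species) and {1..15} (complexes); rate constants k 1 .. k 16.\<close>

fun cplx :: "nat \<Rightarrow> nat list" where
  "cplx n = (if n = 1 then [1] else if n = 2 then [2] else if n = 3 then [3]
    else if n = 4 then [4] else if n = 5 then [4,5] else if n = 6 then [6]
    else if n = 7 then [2,7] else if n = 8 then [3,7] else if n = 9 then [8]
    else if n = 10 then [3,5] else if n = 11 then [1,7] else if n = 12 then [9]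
    else if n = 13 then [1,5] else if n = 14 then [7] else if n = 15 then [5]
    else [])"

definition Ystoich :: "nat \<Rightarrow> nat \<Rightarrow> nat" where
  "Ystoich s j = count_list (cplx j) s"

text \<open>Reaction edges (source complex, target complex, index of rate constant).\<close>
definition edges :: "(nat \<times> nat \<times> nat) list" where
  "edges = [(1,2,1),(2,1,2),(2,3,3),(3,2,4),(3,4,5),(5,6,6),(6,5,7),(6,7,8),
            (7,6,9),(8,9,10),(9,8,11),(9,10,12),(11,12,13),(12,11,14),(12,13,15),
            (14,15,16)]"

definition kappa :: "(nat \<Rightarrow> real) \<Rightarrow> nat \<Rightarrow> nat \<Rightarrow> real" where
  "kappa k i j = sum_list (map (\<lambda>(a,b,r). k r) (filter (\<lambda>(a,b,r). a = i \<and> b = j) edges))"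

definition Lap :: "(nat \<Rightarrow> real) \<Rightarrow> nat \<Rightarrow> nat \<Rightarrow> real" where
  "Lap k j i = (if j = i then - (\<Sum>l\<in>{1..15}. kappa k i l) else kappa k i j)"

definition Mmat :: "(nat \<Rightarrow> real) \<Rightarrow> nat \<Rightarrow> nat \<Rightarrow> real" where
  "Mmat k s i = (\<Sum>j\<in>{1..15}. real (Ystoich s j) * Lap k j i)"

definition Psi :: "(nat \<Rightarrow> real) \<Rightarrow> nat \<Rightarrow> real" where
  "Psi x j = (\<Prod>s\<in>{1..9}. x s ^ Ystoich s j)"

definition in_row_span :: "(nat \<Rightarrow> real) \<Rightarrow> (nat \<Rightarrow> real) \<Rightarrow> bool" where
  "in_row_span k a \<longleftrightarrow> (\<exists>c :: nat \<Rightarrow> real. \<forall>j\<in>{1..15}. a j = (\<Sum>s\<in>{1..9}. c s * Mmat k s j))"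

text \<open>Type 1 complex-linear invariants on the selected complexes I (I \<subseteq> {1..15}),
  identified with their coefficient vectors a (a_j = coefficient of x^{C_j},
  zero off I): the polynomial is sum_{j in I} a_j x^{C_j}.\<close>
definition type1_invariants :: "(nat \<Rightarrow> real) \<Rightarrow> nat set \<Rightarrow> (nat \<Rightarrow> real) set" where
  "type1_invariants k I = {a. (\<forall>j. j \<notin> I \<longrightarrow> a j = 0) \<and> in_row_span k a}"

definition steady_state :: "(nat \<Rightarrow> real) \<Rightarrow> (nat \<Rightarrow> real) \<Rightarrow> bool" where
  "steady_state k x \<longleftrightarrow> (\<forall>s\<in>{1..9}. x s \<ge> 0) \<and>
     (\<forall>s\<in>{1..9}. (\<Sum>j\<in>{1..15}. Mmat k s j * Psi x j) = 0)"

end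

theory Submission imports Defs begin
lemma S15: "{1..15::nat} = {1,2,3,4,5,6,7,8,9,10,11,12,13,14,15}" by (auto; presburger)
lemma S9: "{1..9::nat} = {1,2,3,4,5,6,7,8,9}" by (auto; presburger)
lemma kap: "kappa k i l = (if i=1 \<and> l=2 then k 1 else if i=2\<and>l=1 then k 2 else if i=2\<and>l=3 then k 3
  else if i=3\<and>l=2 then k 4 else if i=3\<and>l=4 then k 5 else if i=5\<and>l=6 then k 6 else if i=6\<and>l=5 then k 7
  else if i=6\<and>l=7 then k 8 else if i=7\<and>l=6 then k 9 else if i=8\<and>l=9 then k 10 else if i=9\<and>l=8 then k 11
  else if i=9\<and>l=10 then k 12 else if i=11\<and>l=12 then k 13 else if i=12\<and>l=11 then k 14 else if i=12\<and>l=13 then k 15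
  else if i=14\<and>l=15 then k 16 else 0)"
  unfolding kappa_def edges_def by auto

definition R :: "(nat \<Rightarrow> real) \<Rightarrow> (nat \<Rightarrow> real) \<Rightarrow> nat \<Rightarrow> real" where
 "R k c j = (if j=1 then k 1*(c 2 - c 1)
   else if j=2 then k 2*(c 1 - c 2) + k 3*(c 3 - c 2)
   else if j=3 then k 4*(c 2 - c 3) + k 5*(c 4 - c 3)
   else if j=5 then k 6*(c 6 - c 4 - c 5)
   else if j=6 then k 7*(c 4 + c 5 - c 6) + k 8*(c 2 + c 7 - c 6)
   else if j=7 then k 9*(c 6 - c 2 - c 7)
   else if j=8 then k 10*(c 8 - c 3 - c 7)
   else if j=9 then k 11*(c 3 + c 7 - c 8) + k 12*(c 3 + c 5 - c 8)
   else if j=11 then k 13*(c 9 - c 1 - c 7)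
   else if j=12 then k 14*(c 1 + c 7 - c 9) + k 15*(c 1 + c 5 - c 9)
   else if j=14 then k 16*(c 5 - c 7) else 0)"

lemma rowM: "j \<in> {1..15} \<Longrightarrow> (\<Sum>s\<in>{1..9}. c s * Mmat k s j) = R k c j"
  unfolding Mmat_def Lap_def Ystoich_def S15 S9 kap
  apply (elim insertE)
  by (simp_all add: R_def algebra_simps)

lemma span_iff: "in_row_span k a \<longleftrightarrow> (\<exists>c. \<forall>j\<in>{1..15}. a j = R k c j)"
  unfolding in_row_span_def using rowM by auto

lemma t1_iff: "a \<in> type1_invariants k I \<longleftrightarrow> (\<forall>j. j \<notin> I \<longrightarrow> a j = 0) \<and> (\<exists>c. \<forall>j\<in>{1..15}. a j = R k c j)"
  unfolding type1_invariants_def span_iff by simp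

lemma ss: assumes "in_row_span k a" "steady_state k x"
  shows "(\<Sum>j\<in>{1..15}. a j * Psi x j) = 0"
proof -
  obtain c where c: "\<forall>j\<in>{1..15}. a j = (\<Sum>s\<in>{1..9}. c s * Mmat k s j)"
    using assms(1) unfolding in_row_span_def by blast
  have "(\<Sum>j\<in>{1..15}. a j * Psi x j) = (\<Sum>j\<in>{1..15}. \<Sum>s\<in>{1..9}. c s * (Mmat k s j * Psi x j))"
    using c by (simp add: sum_distrib_right mult.assoc)
  also have "\<dots> = (\<Sum>s\<in>{1..9}. c s * (\<Sum>j\<in>{1..15}. Mmat k s j * Psi x j))"
    by (subst sum.swap) (simp add: sum_distrib_left)
  also have "\<dots> = 0" using assms(2) unfolding steady_state_def by simp
  finally show ?thesis .
qed

lemma part1: assumes kpos: "\<forall>i\<in>{1..16}. k i > (0::real)"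
  shows "type1_invariants k {7, 8, 11, 14} = {\<lambda>_. 0}"
proof
  have "k 1 > 0" "k 2 > 0" "k 3 > 0" "k 4 > 0" "k 5 > 0" "k 8 > 0" "k 6 > 0" "k 11 > 0" "k 12 > 0" "k 14 > 0" "k 15 > 0"
    using kpos by auto
  note kp = this
  show "type1_invariants k {7, 8, 11, 14} \<subseteq> {\<lambda>_. 0}"
  proof
    fix a assume "a \<in> type1_invariants k {7, 8, 11, 14}"
    then obtain c where z: "\<forall>j. j \<notin> {7, 8, 11, 14} \<longrightarrow> a j = 0" and e: "\<forall>j\<in>{1..15}. a j = R k c j"
      unfolding t1_iff by blast
    have E: "a j = R k c j" if "j \<in> {1..15}" for j using e that by blast
    have h1: "c 2 = c 1" using E[of 1] z kp by (simp add: R_def)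
    have h2: "c 3 = c 2" using E[of 2] z kp h1 by (simp add: R_def)
    have h3: "c 4 = c 3" using E[of 3] z kp h2 by (simp add: R_def)
    have h5: "c 6 = c 4 + c 5" using E[of 5] z kp by (simp add: R_def)
    have h6: "c 6 = c 2 + c 7" using E[of 6] z kp h5 by (simp add: R_def)
    have h57: "c 5 = c 7" using h6 h5 h3 h2 by simp
    have h9: "(k 11 + k 12) * (c 3 + c 7 - c 8) = 0" using E[of 9] z h57 by (simp add: R_def algebra_simps)
    hence h8: "c 8 = c 3 + c 7" using kp by simp
    have h12: "(k 14 + k 15) * (c 1 + c 7 - c 9) = 0" using E[of 12] z h57 by (simp add: R_def algebra_simps)
    hence h9': "c 9 = c 1 + c 7" using kp by simp
    show "a \<in> {\<lambda>_. 0}"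
    proof -
      have "a j = 0" for j
      proof (cases "j \<in> {7, 8, 11, 14}")
        case True
        then show ?thesis using E[of j] h1 h2 h3 h5 h6 h57 h8 h9' by (auto simp: R_def)
      qed (use z in auto)
      thus ?thesis by auto
    qed
  qed
  show "{\<lambda>_. 0} \<subseteq> type1_invariants k {7, 8, 11, 14}"
  proof -
    have "(\<lambda>_. 0) \<in> type1_invariants k {7, 8, 11, 14}"
      unfolding t1_iff by (intro conjI exI[of _ "\<lambda>_. 0"]) (auto simp: R_def)
    thus ?thesis by simp
  qed
qed

lemma part2_3: assumes kpos: "\<forall>i\<in>{1..16}. k i > (0::real)"
  and v_def: "v = (\<lambda>_. 0)(3 := - k 5, 8 := k 10 * k 12 / (k 11 + k 12), 11 := k 13 * k 15 / (k 14 + k 15), 14 := k 16)"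
  and I_def: "I = {3, 7, 8, 11, 14}"
  shows "type1_invariants k I = {(\<lambda>j. t * v j) | t. True}"
proof
  have kp: "k 1 > 0" "k 2 > 0" "k 3 > 0" "k 4 > 0" "k 5 > 0" "k 6 > 0" "k 8 > 0" "k 9 > 0" "k 10 > 0"
     "k 11 > 0" "k 12 > 0" "k 13 > 0" "k 14 > 0" "k 15 > 0" "k 16 > 0"
    using kpos by auto
  have nz: "k 4 + k 5 \<noteq> 0" "k 11 + k 12 \<noteq> 0" "k 14 + k 15 \<noteq> 0" "k 2 \<noteq> 0" "k 2 * (k 4 + k 5) \<noteq> 0"
    using kp by auto
  show "type1_invariants k I \<subseteq> {(\<lambda>j. t * v j) | t. True}"
  proof
    fix a assume "a \<in> type1_invariants k I"
    then obtain c where z: "\<forall>j. j \<notin> I \<longrightarrow> a j = 0" and e: "\<forall>j\<in>{1..15}. a j = R k c j"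
      unfolding t1_iff by blast
    have E: "a j = R k c j" if "j \<in> {1..15}" for j using e that by blast
    have h5: "c 6 = c 4 + c 5" using E[of 5] z kp by (simp add: R_def I_def)
    have h6: "c 6 = c 2 + c 7" using E[of 6] z kp h5 by (simp add: R_def I_def)
    have h9: "0 = k 11*(c 3 + c 7 - c 8) + k 12*(c 3 + c 5 - c 8)" using E[of 9] z by (simp add: R_def I_def)
    have "(k 11+k 12)*(c 8-c 3-c 7) - k 12*(c 5-c 7) = -(k 11*(c 3 + c 7 - c 8) + k 12*(c 3 + c 5 - c 8))"
      by (simp add: algebra_simps)
    hence "(k 11+k 12)*(c 8-c 3-c 7) = k 12*(c 5-c 7)" using h9 by linarith
    hence h8: "c 8-c 3-c 7 = k 12*(c 5-c 7)/(k 11+k 12)" using kp by (simp add: field_simps)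
    have h12: "0 = k 14*(c 1 + c 7 - c 9) + k 15*(c 1 + c 5 - c 9)" using E[of 12] z by (simp add: R_def I_def)
    have "(k 14+k 15)*(c 9-c 1-c 7) - k 15*(c 5-c 7) = -(k 14*(c 1 + c 7 - c 9) + k 15*(c 1 + c 5 - c 9))"
      by (simp add: algebra_simps)
    hence "(k 14+k 15)*(c 9-c 1-c 7) = k 15*(c 5-c 7)" using h12 by linarith
    hence h11: "c 9-c 1-c 7 = k 15*(c 5-c 7)/(k 14+k 15)" using kp by (simp add: field_simps)
    have h1: "c 2 = c 1" using E[of 1] z kp by (simp add: R_def I_def)
    have h2: "c 3 = c 2" using E[of 2] z kp h1 by (simp add: R_def I_def)
    have hd: "c 4 - c 3 = -(c 5 - c 7)" using h1 h2 h5 h6 by linarith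
    have "a 3 = k 5 * (c 4 - c 3)" using E[of 3] h1 h2 by (simp add: R_def)
    hence Ei: "a 3 = (c 5 - c 7) * v 3" using hd by (simp add: v_def algebra_simps)

    have "a j = (c 5 - c 7) * v j" for j
    proof (cases "j \<in> I")
      case True
      then consider "j = 3" | "j = 7" | "j = 8" | "j = 11" | "j = 14" unfolding I_def by auto
      then show ?thesis
      proof cases
        case 1 then show ?thesis using Ei by simp
      next
        case 2 then show ?thesis using E[of 7] h6 by (simp add: R_def v_def)
      next
        case 3 then show ?thesis using E[of 8] h8 by (simp add: R_def v_def)
      next
        case 4 then show ?thesis using E[of 11] h11 by (simp add: R_def v_def)
      next
        case 5 then show ?thesis using E[of 14] by (simp add: R_def v_def)
      qed
    next
      case False then show ?thesis using z by (auto simp: v_def I_def)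
    qed
    thus "a \<in> {(\<lambda>j. t * v j) | t. True}" by blast
  qed
  show "{(\<lambda>j. t * v j) | t. True} \<subseteq> type1_invariants k I"
  proof clarify
    fix t
    define D1 where "D1 = k 4 + k 5"
    define D2 where "D2 = k 11 + k 12"
    define D3 where "D3 = k 14 + k 15"
    have Dnz: "D1 \<noteq> 0" "D2 \<noteq> 0" "D3 \<noteq> 0" "k 2 \<noteq> 0" using nz unfolding D1_def D2_def D3_def by auto
    define p where "p = k 5 * t / D1"
    define q where "q = k 12 * t / D2"
    define r where "r = k 15 * t / D3"
    define s where "s = k 3 * k 5 * t / (k 2 * D1)"
    note vv = v_def[folded D1_def D2_def D3_def]
    show "(\<lambda>j. t * v j) \<in> type1_invariants k I"
      unfolding t1_iff
    proof (intro conjI exI[of _ "(\<lambda>_. 0)(4 := -t, 5 := t, 8 := q, 9 := r)"])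
      show "\<forall>j. j \<notin> I \<longrightarrow> t * v j = 0" by (simp add: v_def I_def)
      show "\<forall>j\<in>{1..15}. t * v j = R k ((\<lambda>_. 0)(4 := -t, 5 := t, 8 := q, 9 := r)) j"
      proof
        fix j :: nat assume "j \<in> {1..15}"
        then consider "j=1"|"j=2"|"j=3"|"j=4"|"j=5"|"j=6"|"j=7"|"j=8"|"j=9"|"j=10"|"j=11"|"j=12"|"j=13"|"j=14"|"j=15"
          unfolding S15 by auto
        then show "t * v j = R k ((\<lambda>_. 0)(4 := -t, 5 := t, 8 := q, 9 := r)) j"
          by cases (simp_all add: R_def vv p_def q_def r_def s_def Dnz field_simps, simp_all add: D1_def D2_def D3_def algebra_simps)
      qed
    qed
  qed
qed

lemma part2_2: assumes kpos: "\<forall>i\<in>{1..16}. k i > (0::real)"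
  and v_def: "v = (\<lambda>_. 0)(2 := - (k 3 * k 5 / (k 4 + k 5)), 8 := k 10 * k 12 / (k 11 + k 12), 11 := k 13 * k 15 / (k 14 + k 15), 14 := k 16)"
  and I_def: "I = {2, 7, 8, 11, 14}"
  shows "type1_invariants k I = {(\<lambda>j. t * v j) | t. True}"
proof
  have kp: "k 1 > 0" "k 2 > 0" "k 3 > 0" "k 4 > 0" "k 5 > 0" "k 6 > 0" "k 8 > 0" "k 9 > 0" "k 10 > 0"
     "k 11 > 0" "k 12 > 0" "k 13 > 0" "k 14 > 0" "k 15 > 0" "k 16 > 0"
    using kpos by auto
  have nz: "k 4 + k 5 \<noteq> 0" "k 11 + k 12 \<noteq> 0" "k 14 + k 15 \<noteq> 0" "k 2 \<noteq> 0" "k 2 * (k 4 + k 5) \<noteq> 0"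
    using kp by auto
  show "type1_invariants k I \<subseteq> {(\<lambda>j. t * v j) | t. True}"
  proof
    fix a assume "a \<in> type1_invariants k I"
    then obtain c where z: "\<forall>j. j \<notin> I \<longrightarrow> a j = 0" and e: "\<forall>j\<in>{1..15}. a j = R k c j"
      unfolding t1_iff by blast
    have E: "a j = R k c j" if "j \<in> {1..15}" for j using e that by blast
    have h5: "c 6 = c 4 + c 5" using E[of 5] z kp by (simp add: R_def I_def)
    have h6: "c 6 = c 2 + c 7" using E[of 6] z kp h5 by (simp add: R_def I_def)
    have h9: "0 = k 11*(c 3 + c 7 - c 8) + k 12*(c 3 + c 5 - c 8)" using E[of 9] z by (simp add: R_def I_def)
    have "(k 11+k 12)*(c 8-c 3-c 7) - k 12*(c 5-c 7) = -(k 11*(c 3 + c 7 - c 8) + k 12*(c 3 + c 5 - c 8))"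
      by (simp add: algebra_simps)
    hence "(k 11+k 12)*(c 8-c 3-c 7) = k 12*(c 5-c 7)" using h9 by linarith
    hence h8: "c 8-c 3-c 7 = k 12*(c 5-c 7)/(k 11+k 12)" using kp by (simp add: field_simps)
    have h12: "0 = k 14*(c 1 + c 7 - c 9) + k 15*(c 1 + c 5 - c 9)" using E[of 12] z by (simp add: R_def I_def)
    have "(k 14+k 15)*(c 9-c 1-c 7) - k 15*(c 5-c 7) = -(k 14*(c 1 + c 7 - c 9) + k 15*(c 1 + c 5 - c 9))"
      by (simp add: algebra_simps)
    hence "(k 14+k 15)*(c 9-c 1-c 7) = k 15*(c 5-c 7)" using h12 by linarith
    hence h11: "c 9-c 1-c 7 = k 15*(c 5-c 7)/(k 14+k 15)" using kp by (simp add: field_simps)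
    have h1: "c 2 = c 1" using E[of 1] z kp by (simp add: R_def I_def)
    have h3: "0 = k 4*(c 2 - c 3) + k 5*(c 4 - c 3)" using E[of 3] z by (simp add: R_def I_def)
    have hd: "c 5 - c 7 = c 2 - c 4" using h5 h6 by linarith
    have "(k 4+k 5)*(c 2-c 3) - k 5*(c 5-c 7) = k 4*(c 2 - c 3) + k 5*(c 4 - c 3)"
      unfolding hd by (simp add: algebra_simps)
    hence "(k 4+k 5)*(c 2-c 3) = k 5*(c 5-c 7)" using h3 by linarith
    hence h23: "c 2-c 3 = k 5*(c 5-c 7)/(k 4+k 5)" using kp by (simp add: field_simps)
    have "a 2 = - k 3 * (c 2 - c 3)" using E[of 2] h1 by (simp add: R_def algebra_simps)
    hence Ei: "a 2 = (c 5 - c 7) * v 2" using h23 by (simp add: v_def)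

    have "a j = (c 5 - c 7) * v j" for j
    proof (cases "j \<in> I")
      case True
      then consider "j = 2" | "j = 7" | "j = 8" | "j = 11" | "j = 14" unfolding I_def by auto
      then show ?thesis
      proof cases
        case 1 then show ?thesis using Ei by simp
      next
        case 2 then show ?thesis using E[of 7] h6 by (simp add: R_def v_def)
      next
        case 3 then show ?thesis using E[of 8] h8 by (simp add: R_def v_def)
      next
        case 4 then show ?thesis using E[of 11] h11 by (simp add: R_def v_def)
      next
        case 5 then show ?thesis using E[of 14] by (simp add: R_def v_def)
      qed
    next
      case False then show ?thesis using z by (auto simp: v_def I_def)
    qed
    thus "a \<in> {(\<lambda>j. t * v j) | t. True}" by blast
  qed
  show "{(\<lambda>j. t * v j) | t. True} \<subseteq> type1_invariants k I"
  proof clarify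
    fix t
    define D1 where "D1 = k 4 + k 5"
    define D2 where "D2 = k 11 + k 12"
    define D3 where "D3 = k 14 + k 15"
    have Dnz: "D1 \<noteq> 0" "D2 \<noteq> 0" "D3 \<noteq> 0" "k 2 \<noteq> 0" using nz unfolding D1_def D2_def D3_def by auto
    define p where "p = k 5 * t / D1"
    define q where "q = k 12 * t / D2"
    define r where "r = k 15 * t / D3"
    define s where "s = k 3 * k 5 * t / (k 2 * D1)"
    note vv = v_def[folded D1_def D2_def D3_def]
    show "(\<lambda>j. t * v j) \<in> type1_invariants k I"
      unfolding t1_iff
    proof (intro conjI exI[of _ "(\<lambda>_. 0)(1 := p, 2 := p, 4 := p - t, 5 := t, 6 := p, 8 := q, 9 := p + r)"])
      show "\<forall>j. j \<notin> I \<longrightarrow> t * v j = 0" by (simp add: v_def I_def)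
      show "\<forall>j\<in>{1..15}. t * v j = R k ((\<lambda>_. 0)(1 := p, 2 := p, 4 := p - t, 5 := t, 6 := p, 8 := q, 9 := p + r)) j"
      proof
        fix j :: nat assume "j \<in> {1..15}"
        then consider "j=1"|"j=2"|"j=3"|"j=4"|"j=5"|"j=6"|"j=7"|"j=8"|"j=9"|"j=10"|"j=11"|"j=12"|"j=13"|"j=14"|"j=15"
          unfolding S15 by auto
        then show "t * v j = R k ((\<lambda>_. 0)(1 := p, 2 := p, 4 := p - t, 5 := t, 6 := p, 8 := q, 9 := p + r)) j"
          by cases (simp_all add: R_def vv p_def q_def r_def s_def Dnz field_simps, simp_all add: D1_def D2_def D3_def algebra_simps)
      qed
    qed
  qed
qed

lemma part2_1: assumes kpos: "\<forall>i\<in>{1..16}. k i > (0::real)"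
  and v_def: "v = (\<lambda>_. 0)(1 := - (k 1 * k 3 * k 5 / (k 2 * (k 4 + k 5))), 8 := k 10 * k 12 / (k 11 + k 12), 11 := k 13 * k 15 / (k 14 + k 15), 14 := k 16)"
  and I_def: "I = {1, 7, 8, 11, 14}"
  shows "type1_invariants k I = {(\<lambda>j. t * v j) | t. True}"
proof
  have kp: "k 1 > 0" "k 2 > 0" "k 3 > 0" "k 4 > 0" "k 5 > 0" "k 6 > 0" "k 8 > 0" "k 9 > 0" "k 10 > 0"
     "k 11 > 0" "k 12 > 0" "k 13 > 0" "k 14 > 0" "k 15 > 0" "k 16 > 0"
    using kpos by auto
  have nz: "k 4 + k 5 \<noteq> 0" "k 11 + k 12 \<noteq> 0" "k 14 + k 15 \<noteq> 0" "k 2 \<noteq> 0" "k 2 * (k 4 + k 5) \<noteq> 0"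
    using kp by auto
  show "type1_invariants k I \<subseteq> {(\<lambda>j. t * v j) | t. True}"
  proof
    fix a assume "a \<in> type1_invariants k I"
    then obtain c where z: "\<forall>j. j \<notin> I \<longrightarrow> a j = 0" and e: "\<forall>j\<in>{1..15}. a j = R k c j"
      unfolding t1_iff by blast
    have E: "a j = R k c j" if "j \<in> {1..15}" for j using e that by blast
    have h5: "c 6 = c 4 + c 5" using E[of 5] z kp by (simp add: R_def I_def)
    have h6: "c 6 = c 2 + c 7" using E[of 6] z kp h5 by (simp add: R_def I_def)
    have h9: "0 = k 11*(c 3 + c 7 - c 8) + k 12*(c 3 + c 5 - c 8)" using E[of 9] z by (simp add: R_def I_def)
    have "(k 11+k 12)*(c 8-c 3-c 7) - k 12*(c 5-c 7) = -(k 11*(c 3 + c 7 - c 8) + k 12*(c 3 + c 5 - c 8))"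
      by (simp add: algebra_simps)
    hence "(k 11+k 12)*(c 8-c 3-c 7) = k 12*(c 5-c 7)" using h9 by linarith
    hence h8: "c 8-c 3-c 7 = k 12*(c 5-c 7)/(k 11+k 12)" using kp by (simp add: field_simps)
    have h12: "0 = k 14*(c 1 + c 7 - c 9) + k 15*(c 1 + c 5 - c 9)" using E[of 12] z by (simp add: R_def I_def)
    have "(k 14+k 15)*(c 9-c 1-c 7) - k 15*(c 5-c 7) = -(k 14*(c 1 + c 7 - c 9) + k 15*(c 1 + c 5 - c 9))"
      by (simp add: algebra_simps)
    hence "(k 14+k 15)*(c 9-c 1-c 7) = k 15*(c 5-c 7)" using h12 by linarith
    hence h11: "c 9-c 1-c 7 = k 15*(c 5-c 7)/(k 14+k 15)" using kp by (simp add: field_simps)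
    have h3: "0 = k 4*(c 2 - c 3) + k 5*(c 4 - c 3)" using E[of 3] z by (simp add: R_def I_def)
    have hd: "c 5 - c 7 = c 2 - c 4" using h5 h6 by linarith
    have "(k 4+k 5)*(c 2-c 3) - k 5*(c 5-c 7) = k 4*(c 2 - c 3) + k 5*(c 4 - c 3)"
      unfolding hd by (simp add: algebra_simps)
    hence "(k 4+k 5)*(c 2-c 3) = k 5*(c 5-c 7)" using h3 by linarith
    hence h23: "c 2-c 3 = k 5*(c 5-c 7)/(k 4+k 5)" using kp by (simp add: field_simps)
    have h2: "0 = k 2*(c 1 - c 2) + k 3*(c 3 - c 2)" using E[of 2] z by (simp add: R_def I_def)
    hence "k 2*(c 1 - c 2) = k 3*(c 2 - c 3)" by (simp add: algebra_simps)
    hence "k 2*(c 1 - c 2) = k 3 * k 5*(c 5-c 7)/(k 4+k 5)" using h23 by simp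
    moreover have "c 1 - c 2 = (k 2 * (c 1 - c 2)) / k 2" using nz(4) by simp
    ultimately have "c 1 - c 2 = (k 3 * k 5*(c 5-c 7)/(k 4+k 5)) / k 2" by metis
    hence h12': "c 1 - c 2 = k 3 * k 5*(c 5-c 7)/(k 2 * (k 4+k 5))" by (simp add: divide_divide_eq_left mult.commute)
    have "a 1 = - k 1 * (c 1 - c 2)" using E[of 1] by (simp add: R_def algebra_simps)
    hence Ei: "a 1 = (c 5 - c 7) * v 1" using h12' by (simp add: v_def)

    have "a j = (c 5 - c 7) * v j" for j
    proof (cases "j \<in> I")
      case True
      then consider "j = 1" | "j = 7" | "j = 8" | "j = 11" | "j = 14" unfolding I_def by auto
      then show ?thesis
      proof cases
        case 1 then show ?thesis using Ei by simp
      next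
        case 2 then show ?thesis using E[of 7] h6 by (simp add: R_def v_def)
      next
        case 3 then show ?thesis using E[of 8] h8 by (simp add: R_def v_def)
      next
        case 4 then show ?thesis using E[of 11] h11 by (simp add: R_def v_def)
      next
        case 5 then show ?thesis using E[of 14] by (simp add: R_def v_def)
      qed
    next
      case False then show ?thesis using z by (auto simp: v_def I_def)
    qed
    thus "a \<in> {(\<lambda>j. t * v j) | t. True}" by blast
  qed
  show "{(\<lambda>j. t * v j) | t. True} \<subseteq> type1_invariants k I"
  proof clarify
    fix t
    define D1 where "D1 = k 4 + k 5"
    define D2 where "D2 = k 11 + k 12"
    define D3 where "D3 = k 14 + k 15"
    have Dnz: "D1 \<noteq> 0" "D2 \<noteq> 0" "D3 \<noteq> 0" "k 2 \<noteq> 0" using nz unfolding D1_def D2_def D3_def by auto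
    define p where "p = k 5 * t / D1"
    define q where "q = k 12 * t / D2"
    define r where "r = k 15 * t / D3"
    define s where "s = k 3 * k 5 * t / (k 2 * D1)"
    note vv = v_def[folded D1_def D2_def D3_def]
    show "(\<lambda>j. t * v j) \<in> type1_invariants k I"
      unfolding t1_iff
    proof (intro conjI exI[of _ "(\<lambda>_. 0)(1 := p + s, 2 := p, 4 := p - t, 5 := t, 6 := p, 8 := q, 9 := p + s + r)"])
      show "\<forall>j. j \<notin> I \<longrightarrow> t * v j = 0" by (simp add: v_def I_def)
      show "\<forall>j\<in>{1..15}. t * v j = R k ((\<lambda>_. 0)(1 := p + s, 2 := p, 4 := p - t, 5 := t, 6 := p, 8 := q, 9 := p + s + r)) j"
      proof
        fix j :: nat assume "j \<in> {1..15}"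
        then consider "j=1"|"j=2"|"j=3"|"j=4"|"j=5"|"j=6"|"j=7"|"j=8"|"j=9"|"j=10"|"j=11"|"j=12"|"j=13"|"j=14"|"j=15"
          unfolding S15 by auto
        then show "t * v j = R k ((\<lambda>_. 0)(1 := p + s, 2 := p, 4 := p - t, 5 := t, 6 := p, 8 := q, 9 := p + s + r)) j"
          by cases (simp_all add: R_def vv p_def q_def r_def s_def Dnz field_simps, simp_all add: D1_def D2_def D3_def algebra_simps)
      qed
    qed
  qed
qed

lemma fin: assumes T: "type1_invariants k {i,7,8,11,14} = {(\<lambda>j. t * v j)|t. True}"
  and v_def: "v = (\<lambda>_. 0)(i := - ci, 8 := A, 11 := B, 14 := k 16)" and i: "i \<in> {1,2,3}" and k16: "k 16 > 0"
  shows "v \<noteq> (\<lambda>_. 0) \<and> (\<forall>x. steady_state k x \<longrightarrow> k 16 * Psi x 14 - ci * Psi x i + A * Psi x 8 + B * Psi x 11 = 0)"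
proof
  have "v 14 \<noteq> 0" using v_def i k16 by auto
  thus "v \<noteq> (\<lambda>_. 0)" by auto
  have "v \<in> type1_invariants k {i,7,8,11,14}" unfolding T by (rule CollectI, rule exI[of _ 1]) simp
  hence rs: "in_row_span k v" unfolding type1_invariants_def by simp
  show "\<forall>x. steady_state k x \<longrightarrow> k 16 * Psi x 14 - ci * Psi x i + A * Psi x 8 + B * Psi x 11 = 0"
  proof (intro allI impI)
    fix x assume "steady_state k x"
    from ss[OF rs this] have "(\<Sum>j\<in>{1..15}. v j * Psi x j) = 0" .
    moreover have "(\<Sum>j\<in>{1..15}. v j * Psi x j) = k 16 * Psi x 14 - ci * Psi x i + A * Psi x 8 + B * Psi x 11"
      using i unfolding S15 v_def by auto
    ultimately show "k 16 * Psi x 14 - ci * Psi x i + A * Psi x 8 + B * Psi x 11 = 0" by simp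
  qed
qed

theorem mainTheorem8:
  fixes k :: "nat \<Rightarrow> real"
  assumes kpos: "\<forall>i\<in>{1..16}. k i > 0"
  defines "A \<equiv> k 10 * k 12 / (k 11 + k 12)"
      and "B \<equiv> k 13 * k 15 / (k 14 + k 15)"
      and "c1 \<equiv> k 1 * k 3 * k 5 / (k 2 * (k 4 + k 5))"
      and "c2 \<equiv> k 3 * k 5 / (k 4 + k 5)"
      and "c3 \<equiv> k 5"
  shows "type1_invariants k {7, 8, 11, 14} = {\<lambda>_. 0}
    \<and> (\<forall>i\<in>{1, 2, 3}.
         let ci = (if i = 1 then c1 else if i = 2 then c2 else c3);
             v = (\<lambda>_. 0)(i := - ci, 8 := A, 11 := B, 14 := k 16)
         in v \<noteq> (\<lambda>_. 0)
            \<and> type1_invariants k {i, 7, 8, 11, 14} = {(\<lambda>j. t * v j) | t. True}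
            \<and> (\<forall>x. steady_state k x \<longrightarrow>
                 k 16 * Psi x 14 - ci * Psi x i + A * Psi x 8 + B * Psi x 11 = 0))"
proof -
  have k16: "k 16 > 0" using kpos by auto
  have T1: "type1_invariants k {1, 7, 8, 11, 14} = {(\<lambda>j. t * ((\<lambda>_. 0)(1 := - c1, 8 := A, 11 := B, 14 := k 16)) j) | t. True}"
    by (rule part2_1[OF kpos _ refl]) (unfold A_def B_def c1_def, rule refl)
  have T2: "type1_invariants k {2, 7, 8, 11, 14} = {(\<lambda>j. t * ((\<lambda>_. 0)(2 := - c2, 8 := A, 11 := B, 14 := k 16)) j) | t. True}"
    by (rule part2_2[OF kpos _ refl]) (unfold A_def B_def c2_def, rule refl)
  have T3: "type1_invariants k {3, 7, 8, 11, 14} = {(\<lambda>j. t * ((\<lambda>_. 0)(3 := - c3, 8 := A, 11 := B, 14 := k 16)) j) | t. True}"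
    by (rule part2_3[OF kpos _ refl]) (unfold A_def B_def c3_def, rule refl)
  note F1 = fin[OF T1 refl _ k16] and F2 = fin[OF T2 refl _ k16] and F3 = fin[OF T3 refl _ k16]
  show ?thesis using part1[OF kpos] T1 T2 T3 F1 F2 F3 by (simp add: Let_def)
qed
end
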